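(* Let $k\ge 4$ and let $\sigma\in S_k\setminus Z_k$ with $\sigma(1)=1$. Then there exists $i\in\{1,2,\dots,k\}$ such that $F_i(\sigma)\in S_{k-1}\setminus Z_{k-1}$.
   Context: $S_k$ is the group of permutations of $\{1,\dots,k\}$, and $Z_k=\{z_0,\dots,z_{k-1}\}\subseteq S_k$ is the subgroup of cyclic shifts, $z_h(i)=i+h$ if $i\le k-h$ and $z_h(i)=i+h-k$ if $i>k-h$. For $i\in\{1,\dots,k\}$ and $\sigma\in S_k$, $F_i(\sigma)\in S_{k-1}$ is defined for $j\in\{1,\dots,k-1\}$ by: $F_i(\sigma)(j)=\sigma(j)$ if $j<i$ and $\sigma(j)<\sigma(i)$; $=\sigma(j)-1$ if $j<i$ and $\sigma(j)>\sigma(i)$; $=\sigma(j+1)$ if $j\ge i$ and $\sigma(j+1)<\sigma(i)$; $=\sigma(j+1)-1$ if $j\ge i$ and $\sigma(j+1)>\sigma(i)$. (That is, delete position $i$ and the value $\sigma(i)$ and relabel order-preservingly.) *)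

theory Defs
  imports "HOL-Combinatorics.Permutations"
begin

text \<open>Permutations of {1..k} are functions nat => nat with sigma permutes {1..k}
  (identity outside {1..k}).\<close>

definition zshift :: "nat \<Rightarrow> nat \<Rightarrow> nat \<Rightarrow> nat" where
  "zshift k h i = (if i \<in> {1..k} then (if i \<le> k - h then i + h else i + h - k) else i)"

definition Zk :: "nat \<Rightarrow> (nat \<Rightarrow> nat) set" where
  "Zk k = {zshift k h | h. h < k}"

definition Fdel :: "nat \<Rightarrow> nat \<Rightarrow> (nat \<Rightarrow> nat) \<Rightarrow> nat \<Rightarrow> nat" where
  "Fdel k i \<sigma> j =
     (if j \<in> {1..k-1} then
        (if j < i then (if \<sigma> j < \<sigma> i then \<sigma> j else \<sigma> j - 1)
         else (if \<sigma> (j+1) < \<sigma> i then \<sigma> (j+1) else \<sigma> (j+1) - 1))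
      else j)"

end

theory Submission
  imports Defs
begin

lemma perm_facts:
  assumes "\<sigma> permutes {1..k}" and "x \<in> {1..k}"
  shows "\<sigma> x \<in> {1..k}"
  using iffD2[OF permutes_in_image[OF assms(1)] assms(2)] .

lemma Fdel_alt:
  assumes "j \<in> {1..k-1}"
  shows "Fdel k i \<sigma> j = (let v = \<sigma> (if j < i then j else j+1) in if v < \<sigma> i then v else v - 1)"
  using assms unfolding Fdel_def Let_def by (cases "j < i") simp_all

lemma rel_arith:
  fixes v1 v2 c :: nat
  assumes "v1 \<noteq> c" "v2 \<noteq> c" "v1 \<ge> 1" "v2 \<ge> 1"
  shows "((if v1 < c then v1 else v1 - 1) < (if v2 < c then v2 else v2 - 1)) = (v1 < v2)"
  using assms by (simp split: if_split) linarith

lemma Fdel_less: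
  assumes p: "\<sigma> permutes {1..k}" and i: "i \<in> {1..k}"
    and j1: "j1 \<in> {1..k-1}" and j2: "j2 \<in> {1..k-1}"
  shows "Fdel k i \<sigma> j1 < Fdel k i \<sigma> j2 \<longleftrightarrow>
         \<sigma> (if j1 < i then j1 else j1+1) < \<sigma> (if j2 < i then j2 else j2+1)"
proof -
  define q1 where "q1 = (if j1 < i then j1 else j1+1)"
  define q2 where "q2 = (if j2 < i then j2 else j2+1)"
  have q1: "q1 \<in> {1..k}" "q1 \<noteq> i" using j1 i unfolding q1_def by auto
  have q2: "q2 \<in> {1..k}" "q2 \<noteq> i" using j2 i unfolding q2_def by auto
  have inj: "inj \<sigma>" using permutes_inj[OF p] .
  have n1: "\<sigma> q1 \<noteq> \<sigma> i" using q1 inj by (meson injD)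
  have n2: "\<sigma> q2 \<noteq> \<sigma> i" using q2 inj by (meson injD)
  have g1: "\<sigma> q1 \<ge> 1" using perm_facts[OF p q1(1)] by auto
  have g2: "\<sigma> q2 \<ge> 1" using perm_facts[OF p q2(1)] by auto
  have gi: "\<sigma> i \<ge> 1" using perm_facts[OF p i] by auto
  show ?thesis
    unfolding Fdel_alt[OF j1] Fdel_alt[OF j2] Let_def q1_def[symmetric] q2_def[symmetric]
    by (rule rel_arith[OF n1 n2 g1 g2])
qed

lemma Fdel_permutes:
  assumes p: "\<sigma> permutes {1..k}" and i: "i \<in> {1..k}"
  shows "Fdel k i \<sigma> permutes {1..k-1}"
proof (rule bij_imp_permutes)
  have inj: "inj \<sigma>" using permutes_inj[OF p] .
  have injF: "inj_on (Fdel k i \<sigma>) {1..k-1}"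
  proof (rule inj_onI)
    fix x y assume x: "x \<in> {1..k-1}" and y: "y \<in> {1..k-1}" and e: "Fdel k i \<sigma> x = Fdel k i \<sigma> y"
    define q1 where "q1 = (if x < i then x else x+1)"
    define q2 where "q2 = (if y < i then y else y+1)"
    have "\<not> \<sigma> q1 < \<sigma> q2" "\<not> \<sigma> q2 < \<sigma> q1"
      using Fdel_less[OF p i x y] Fdel_less[OF p i y x] e unfolding q1_def q2_def by auto
    then have "\<sigma> q1 = \<sigma> q2" by auto
    then have "q1 = q2" using inj by (meson injD)
    then show "x = y" unfolding q1_def q2_def by (auto split: if_splits)
  qed
  have img: "Fdel k i \<sigma> ` {1..k-1} \<subseteq> {1..k-1}"
  proof
    fix y assume "y \<in> Fdel k i \<sigma> ` {1..k-1}"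
    then obtain j where j: "j \<in> {1..k-1}" and y: "y = Fdel k i \<sigma> j" by auto
    define q where "q = (if j < i then j else j+1)"
    have q: "q \<in> {1..k}" "q \<noteq> i" using j i unfolding q_def by auto
    have n: "\<sigma> q \<noteq> \<sigma> i" using q inj by (meson injD)
    have "\<sigma> q \<in> {1..k}" "\<sigma> i \<in> {1..k}" using perm_facts[OF p] q i by auto
    then show "y \<in> {1..k-1}"
      unfolding y Fdel_alt[OF j] Let_def q_def[symmetric] using n by auto
  qed
  show "bij_betw (Fdel k i \<sigma>) {1..k-1} {1..k-1}"
    unfolding bij_betw_def using injF endo_inj_surj[OF _ img injF] by auto
  show "\<And>x. x \<notin> {1..k - 1} \<Longrightarrow> Fdel k i \<sigma> x = x" unfolding Fdel_def by auto
qed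

theorem lemma4p5:
  fixes k :: nat and \<sigma> :: "nat \<Rightarrow> nat"
  assumes "k \<ge> 4"
    and "\<sigma> permutes {1..k}"
    and "\<sigma> \<notin> Zk k"
    and "\<sigma> 1 = 1"
  shows "\<exists>i\<in>{1..k}. Fdel k i \<sigma> permutes {1..k-1} \<and> Fdel k i \<sigma> \<notin> Zk (k-1)"
proof -
  note p = assms(2)
  have inj: "inj \<sigma>" using permutes_inj[OF p] .
  have out: "\<And>x. x \<notin> {1..k} \<Longrightarrow> \<sigma> x = x" using p unfolding permutes_def by auto
  have "\<exists>x. x \<in> {1..k} \<and> \<sigma> x \<noteq> x"
  proof (rule ccontr)
    assume "\<not> ?thesis"
    then have "\<sigma> = zshift k 0" using out unfolding zshift_def by (auto simp: fun_eq_iff)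
    then have "\<sigma> \<in> Zk k" unfolding Zk_def using assms(1) by auto
    then show False using assms(3) by auto
  qed
  then have ex: "\<exists>x. x \<in> {1..k} \<and> \<sigma> x \<noteq> x" .
  define a where "a = (LEAST x. x \<in> {1..k} \<and> \<sigma> x \<noteq> x)"
  have a: "a \<in> {1..k}" "\<sigma> a \<noteq> a" using LeastI_ex[OF ex] unfolding a_def by auto
  have below: "\<And>y. y \<in> {1..k} \<Longrightarrow> y < a \<Longrightarrow> \<sigma> y = y"
    using not_less_Least unfolding a_def by blast
  have sa: "\<sigma> a \<in> {1..k}" using perm_facts[OF p a(1)] .
  have "\<sigma> a > a"
  proof (rule ccontr)
    assume "\<not> \<sigma> a > a"
    then have "\<sigma> a < a" using a by auto
    then have "\<sigma> (\<sigma> a) = \<sigma> a" using below sa by auto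
    then have "\<sigma> a = a" using inj by (meson injD)
    then show False using a by auto
  qed
  obtain b where b0: "\<sigma> b = a" using permutes_surj[OF p] by (metis surjD)
  have "b \<in> {1..k}"
  proof (rule ccontr)
    assume "b \<notin> {1..k}"
    then have "\<sigma> b = b" using out by auto
    then show False using b0 a(1) \<open>b \<notin> {1..k}\<close> by auto
  qed
  note b = this b0
  have "b \<noteq> a" using a b by auto
  moreover have "\<not> b < a" using below[OF b(1)] b(2) by auto
  ultimately have ab: "a < b" by auto
  have inv: "\<sigma> a > \<sigma> b" using b \<open>\<sigma> a > a\<close> by auto
  have a2: "a \<ge> 2" using a assms(4) by (cases "a = 1") auto
  define i where "i = (if 2 \<notin> {a,b} then 2 else if 3 \<notin> {a,b} then 3 else (4::nat))"
  have i: "i \<in> {2..k}" "i \<noteq> a" "i \<noteq> b" unfolding i_def using assms(1) ab by auto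
  have ik: "i \<in> {1..k}" using i by auto
  show ?thesis
  proof (intro bexI conjI)
    show "Fdel k i \<sigma> permutes {1..k-1}" using Fdel_permutes[OF p ik] .
    show "Fdel k i \<sigma> \<notin> Zk (k-1)"
    proof
      assume "Fdel k i \<sigma> \<in> Zk (k-1)"
      then obtain h where h: "h < k - 1" "Fdel k i \<sigma> = zshift (k-1) h" unfolding Zk_def by auto
      have "\<sigma> i \<noteq> 1"
      proof
        assume "\<sigma> i = 1"
        then have "\<sigma> i = \<sigma> 1" using assms(4) by simp
        then have "i = 1" using inj by (meson injD)
        then show False using i by auto
      qed
      moreover have "\<sigma> i \<in> {1..k}" using perm_facts[OF p ik] .
      ultimately have "Fdel k i \<sigma> 1 = 1" using i assms(1,4) unfolding Fdel_def by auto
      moreover have "zshift (k-1) h 1 = 1 + h" using h assms(1) unfolding zshift_def by auto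
      ultimately have "h = 0" using h by auto
      then have idF: "\<And>j. j \<in> {1..k-1} \<Longrightarrow> Fdel k i \<sigma> j = j" using h unfolding zshift_def by auto
      define a' where "a' = (if a < i then a else a - 1)"
      define b' where "b' = (if b < i then b else b - 1)"
      have a': "a' \<in> {1..k-1}" "(if a' < i then a' else a'+1) = a"
        using a a2 i unfolding a'_def by auto
      have b': "b' \<in> {1..k-1}" "(if b' < i then b' else b'+1) = b"
        using b ab a2 i unfolding b'_def by auto
      have "a' < b'" using ab i unfolding a'_def b'_def by auto
      then have "Fdel k i \<sigma> a' < Fdel k i \<sigma> b'" using idF a' b' by auto
      then have "\<sigma> a < \<sigma> b" using Fdel_less[OF p ik a'(1) b'(1)] a'(2) b'(2) by simp
      then show False using inv by auto
    qed
  qed (rule ik)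
qed

end
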